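(* For any signed graphs $(G,\sigma)$ and $(H,\tau)$, $$\chi_c\big((G,\sigma)\square'(H,\tau)\big)\le 2\max\{\chi_c(G),\chi_c(H)\},$$ where $\chi_c(G),\chi_c(H)$ are the circular chromatic numbers of the underlying unsigned graphs.
   Context: A signed graph $(G,\sigma)$ is a finite graph $G$ (multiple edges allowed, no loops) with a signature $\sigma:E(G)\to\{+1,-1\}$. For real $r\ge 2$, $C^r$ is the circle of circumference $r$, $d_{C^r}(x,y)=\min\{|x-y|,r-|x-y|\}$, $\overline{x}=x+r/2\pmod r$. A circular $r$-coloring of $(G,\sigma)$ is $f:V(G)\to C^r$ with $d_{C^r}(f(u),f(v))\ge1$ for each positive edge $uv$ and $d_{C^r}(f(u),\overline{f(v)})\ge1$ for each negative edge $uv$; $\chi_c(G,\sigma)$ is the infimum of such $r\ge2$. For an unsigned graph $G$, a circular $r$-coloring requires $d_{C^r}(f(u),f(v))\ge1$ for every edge, and $\chi_c(G)$ is the infimum of such $r$. Vertex signs: fix an orientation of $G$; for $u\in V(G)$ let $\sigma(u)=\prod_{e\in E_u}\sigma(e)^{\epsilon(e,u)}$, where $E_u$ is the set of edges incident to $u$ and $\epsilon(e,u)=1$ if $e$ is oriented away from $u$ and $-1$ otherwise; similarly $\tau(x)$ for $x\in V(H)$. The Type 2 Cartesian product $(G,\sigma)\square'(H,\tau)$ has vertex set $V(G)\times V(H)$, with $(u,x)(v,y)$ an edge iff either $u=v$ and $xy\in E(H)$, or $x=y$ and $uv\in E(G)$; the edge $(u,x)(v,x)$ has sign $\sigma(uv)\tau(x)$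 and the edge $(u,x)(u,y)$ has sign $\sigma(u)\tau(xy)$. *)

theory Defs
  imports Complex_Main
begin

text \<open>A signed (multi)graph with a fixed orientation: vertex set V, edge set E,
  each edge e oriented from src e to tgt e (no loops), signature sg e in {1,-1}.\<close>

definition signed_graph ::
  "'a set \<Rightarrow> 'e set \<Rightarrow> ('e \<Rightarrow> 'a) \<Rightarrow> ('e \<Rightarrow> 'a) \<Rightarrow> ('e \<Rightarrow> real) \<Rightarrow> bool" where
  "signed_graph V E src tgt sg \<longleftrightarrow> finite V \<and> finite E \<and>
     (\<forall>e\<in>E. src e \<in> V \<and> tgt e \<in> V \<and> src e \<noteq> tgt e \<and> (sg e = 1 \<or> sg e = -1))"

definition vertex_sign ::
  "'e set \<Rightarrow> ('e \<Rightarrow> 'a) \<Rightarrow> ('e \<Rightarrow> 'a) \<Rightarrow> ('e \<Rightarrow> real) \<Rightarrow> 'a \<Rightarrow> real" where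
  "vertex_sign E src tgt sg u =
     (\<Prod>e\<in>{e\<in>E. src e = u \<or> tgt e = u}. sg e powi (if src e = u then 1 else -1))"

text \<open>The circle C^r represented by [0,r).\<close>
definition circ_dist :: "real \<Rightarrow> real \<Rightarrow> real \<Rightarrow> real" where
  "circ_dist r x y = min \<bar>x - y\<bar> (r - \<bar>x - y\<bar>)"

definition circ_bar :: "real \<Rightarrow> real \<Rightarrow> real" where
  "circ_bar r x = (if x + r / 2 < r then x + r / 2 else x + r / 2 - r)"

definition signed_circ_coloring ::
  "'a set \<Rightarrow> 'e set \<Rightarrow> ('e \<Rightarrow> 'a) \<Rightarrow> ('e \<Rightarrow> 'a) \<Rightarrow> ('e \<Rightarrow> real) \<Rightarrow> real \<Rightarrow> ('a \<Rightarrow> real) \<Rightarrow> bool" where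
  "signed_circ_coloring V E src tgt sg r f \<longleftrightarrow> 2 \<le> r \<and> (\<forall>v\<in>V. f v \<in> {0..<r}) \<and>
     (\<forall>e\<in>E. (sg e = 1 \<longrightarrow> 1 \<le> circ_dist r (f (src e)) (f (tgt e))) \<and>
             (sg e = -1 \<longrightarrow> 1 \<le> circ_dist r (f (src e)) (circ_bar r (f (tgt e)))))"

definition signed_chi_c ::
  "'a set \<Rightarrow> 'e set \<Rightarrow> ('e \<Rightarrow> 'a) \<Rightarrow> ('e \<Rightarrow> 'a) \<Rightarrow> ('e \<Rightarrow> real) \<Rightarrow> real" where
  "signed_chi_c V E src tgt sg = Inf {r. \<exists>f. signed_circ_coloring V E src tgt sg r f}"

definition circ_coloring ::
  "'a set \<Rightarrow> 'e set \<Rightarrow> ('e \<Rightarrow> 'a) \<Rightarrow> ('e \<Rightarrow> 'a) \<Rightarrow> real \<Rightarrow> ('a \<Rightarrow> real) \<Rightarrow> bool" where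
  "circ_coloring V E src tgt r f \<longleftrightarrow> 2 \<le> r \<and> (\<forall>v\<in>V. f v \<in> {0..<r}) \<and>
     (\<forall>e\<in>E. 1 \<le> circ_dist r (f (src e)) (f (tgt e)))"

definition chi_c :: "'a set \<Rightarrow> 'e set \<Rightarrow> ('e \<Rightarrow> 'a) \<Rightarrow> ('e \<Rightarrow> 'a) \<Rightarrow> real" where
  "chi_c V E src tgt = Inf {r. \<exists>f. circ_coloring V E src tgt r f}"

text \<open>Type 2 Cartesian product. Edges: Inl (e,x) = (src e,x)(tgt e,x); Inr (u,f) = (u,src f)(u,tgt f).\<close>
definition prod_edges :: "'a set \<Rightarrow> 'e set \<Rightarrow> 'b set \<Rightarrow> 'f set \<Rightarrow> (('e \<times> 'b) + ('a \<times> 'f)) set" where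
  "prod_edges V1 E1 V2 E2 = (E1 \<times> V2) <+> (V1 \<times> E2)"

definition prod_src :: "('e \<Rightarrow> 'a) \<Rightarrow> ('f \<Rightarrow> 'b) \<Rightarrow> ('e \<times> 'b) + ('a \<times> 'f) \<Rightarrow> 'a \<times> 'b" where
  "prod_src src1 src2 d = (case d of Inl (e, x) \<Rightarrow> (src1 e, x) | Inr (u, f) \<Rightarrow> (u, src2 f))"

definition prod_tgt :: "('e \<Rightarrow> 'a) \<Rightarrow> ('f \<Rightarrow> 'b) \<Rightarrow> ('e \<times> 'b) + ('a \<times> 'f) \<Rightarrow> 'a \<times> 'b" where
  "prod_tgt tgt1 tgt2 d = (case d of Inl (e, x) \<Rightarrow> (tgt1 e, x) | Inr (u, f) \<Rightarrow> (u, tgt2 f))"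

definition prod2_sign ::
  "'e set \<Rightarrow> ('e \<Rightarrow> 'a) \<Rightarrow> ('e \<Rightarrow> 'a) \<Rightarrow> ('e \<Rightarrow> real) \<Rightarrow>
   'f set \<Rightarrow> ('f \<Rightarrow> 'b) \<Rightarrow> ('f \<Rightarrow> 'b) \<Rightarrow> ('f \<Rightarrow> real) \<Rightarrow> ('e \<times> 'b) + ('a \<times> 'f) \<Rightarrow> real" where
  "prod2_sign E1 src1 tgt1 sg E2 src2 tgt2 tau d = (case d of
      Inl (e, x) \<Rightarrow> sg e * vertex_sign E2 src2 tgt2 tau x
    | Inr (u, f) \<Rightarrow> vertex_sign E1 src1 tgt1 sg u * tau f)"

end

theory Submission
  imports Defs
begin

definition addm :: "real \<Rightarrow> real \<Rightarrow> real \<Rightarrow> real" where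
  "addm r a c = (if a + c < r then a + c else a + c - r)"

lemma addm_range: "a \<in> {0..<r} \<Longrightarrow> c \<in> {0..<r} \<Longrightarrow> addm r a c \<in> {0..<r}"
  unfolding addm_def by auto

lemma addm_dist:
  assumes "a \<in> {0..<r}" "b \<in> {0..<r}" "c \<in> {0..<r}"
  shows "circ_dist r (addm r a c) (addm r b c) = circ_dist r a b"
  using assms unfolding addm_def circ_dist_def by (auto simp: abs_if min_def)

lemma dist_double:
  assumes "a \<in> {0..<r}" "b \<in> {0..<r}" "1 \<le> circ_dist r a b"
  shows "1 \<le> circ_dist (2*r) a b" "1 \<le> circ_dist (2*r) a (circ_bar (2*r) b)"
  using assms unfolding circ_dist_def circ_bar_def by (auto simp: abs_if min_def split: if_splits)

lemma dist_mono:
  assumes "a \<in> {0..<r}" "b \<in> {0..<r}" "r \<le> s" "1 \<le> circ_dist r a b"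
  shows "1 \<le> circ_dist s a b"
  using assms unfolding circ_dist_def by (auto simp: abs_if min_def split: if_splits)

lemma coloring_mono:
  assumes "circ_coloring V E src tgt r f" "r \<le> s" "\<forall>e\<in>E. src e \<in> V \<and> tgt e \<in> V"
  shows "circ_coloring V E src tgt s f"
  using assms unfolding circ_coloring_def
  by (auto intro: dist_mono[of _ r _ s])

lemma coloring_exists:
  assumes "signed_graph V E src tgt sg"
  shows "\<exists>r f. circ_coloring V E src tgt r f"
proof -
  have fin: "finite V" using assms unfolding signed_graph_def by auto
  obtain h where h: "bij_betw h V {0..<card V}" using ex_bij_betw_finite_nat[OF fin] by blast
  define r where "r = max 2 (real (card V))"
  have "circ_coloring V E src tgt r (\<lambda>v. real (h v))"
    unfolding circ_coloring_def
  proof (intro conjI ballI)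
    show "2 \<le> r" unfolding r_def by simp
  next
    fix v assume "v \<in> V"
    then have "h v < card V" using h by (auto simp: bij_betw_def)
    then show "real (h v) \<in> {0..<r}" unfolding r_def by auto
  next
    fix e assume e: "e \<in> E"
    then have s: "src e \<in> V" "tgt e \<in> V" "src e \<noteq> tgt e" using assms unfolding signed_graph_def by auto
    then have ne: "h (src e) \<noteq> h (tgt e)" using h by (auto simp: bij_betw_def inj_on_def)
    have l: "h (src e) < card V" "h (tgt e) < card V" using s h by (auto simp: bij_betw_def)
    have "1 \<le> \<bar>real (h (src e)) - real (h (tgt e))\<bar>" using ne by (auto simp: abs_if)
    moreover have "\<bar>real (h (src e)) - real (h (tgt e))\<bar> \<le> real (card V) - 1" using l by (auto simp: abs_if)
    ultimately show "1 \<le> circ_dist r (real (h (src e))) (real (h (tgt e)))"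
      unfolding circ_dist_def r_def by auto
  qed
  then show ?thesis by blast
qed

theorem theorem3:
  fixes V1 :: "'a set" and E1 :: "'e set" and src1 tgt1 :: "'e \<Rightarrow> 'a" and sg :: "'e \<Rightarrow> real"
    and V2 :: "'b set" and E2 :: "'f set" and src2 tgt2 :: "'f \<Rightarrow> 'b" and tau :: "'f \<Rightarrow> real"
  assumes "signed_graph V1 E1 src1 tgt1 sg"
    and "signed_graph V2 E2 src2 tgt2 tau"
  shows "signed_chi_c (V1 \<times> V2) (prod_edges V1 E1 V2 E2) (prod_src src1 src2) (prod_tgt tgt1 tgt2)
            (prod2_sign E1 src1 tgt1 sg E2 src2 tgt2 tau)
         \<le> 2 * max (chi_c V1 E1 src1 tgt1) (chi_c V2 E2 src2 tgt2)"
proof -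
  define S1 where "S1 = {r. \<exists>f. circ_coloring V1 E1 src1 tgt1 r f}"
  define S2 where "S2 = {r. \<exists>f. circ_coloring V2 E2 src2 tgt2 r f}"
  define S where "S = {r. \<exists>f. signed_circ_coloring (V1 \<times> V2) (prod_edges V1 E1 V2 E2) (prod_src src1 src2) (prod_tgt tgt1 tgt2)
            (prod2_sign E1 src1 tgt1 sg E2 src2 tgt2 tau) r f}"
  have g1: "\<forall>e\<in>E1. src1 e \<in> V1 \<and> tgt1 e \<in> V1" using assms(1) unfolding signed_graph_def by auto
  have g2: "\<forall>e\<in>E2. src2 e \<in> V2 \<and> tgt2 e \<in> V2" using assms(2) unfolding signed_graph_def by auto
  have ne1: "S1 \<noteq> {}" using coloring_exists[OF assms(1)] unfolding S1_def by auto
  have ne2: "S2 \<noteq> {}" using coloring_exists[OF assms(2)] unfolding S2_def by auto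
  have bb1: "bdd_below S1" unfolding S1_def circ_coloring_def bdd_below_def by auto
  have bb2: "bdd_below S2" unfolding S2_def circ_coloring_def bdd_below_def by auto
  have bb: "bdd_below S" unfolding S_def signed_circ_coloring_def bdd_below_def by auto
  have key: "2 * max r1 r2 \<in> S" if rr: "r1 \<in> S1" "r2 \<in> S2" for r1 r2
  proof -
    define r where "r = max r1 r2"
    obtain f0 where "circ_coloring V1 E1 src1 tgt1 r1 f0" using rr(1) unfolding S1_def by auto
    then obtain phi where phi: "circ_coloring V1 E1 src1 tgt1 r phi"
      using coloring_mono[OF _ _ g1, of r1 _ r] unfolding r_def by auto
    obtain f0 where "circ_coloring V2 E2 src2 tgt2 r2 f0" using rr(2) unfolding S2_def by auto
    then obtain psi where psi: "circ_coloring V2 E2 src2 tgt2 r psi"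
      using coloring_mono[OF _ _ g2, of r2 _ r] unfolding r_def by auto
    define F where "F = (\<lambda>(u,x). addm r (phi u) (psi x))"
    have F: "signed_circ_coloring (V1 \<times> V2) (prod_edges V1 E1 V2 E2) (prod_src src1 src2) (prod_tgt tgt1 tgt2)
            (prod2_sign E1 src1 tgt1 sg E2 src2 tgt2 tau) (2*r) F"
      unfolding signed_circ_coloring_def
    proof (intro conjI ballI)
      show "2 \<le> 2 * r" using phi unfolding circ_coloring_def by auto
    next
      fix v assume "v \<in> V1 \<times> V2"
      then show "F v \<in> {0..<2*r}" using phi psi addm_range[of "phi (fst v)" r "psi (snd v)"]
        unfolding circ_coloring_def F_def by (auto split: prod.splits)
    next
      fix d assume d: "d \<in> prod_edges V1 E1 V2 E2"
      have "F (prod_src src1 src2 d) \<in> {0..<r} \<and> F (prod_tgt tgt1 tgt2 d) \<in> {0..<r} \<and>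
            1 \<le> circ_dist r (F (prod_src src1 src2 d)) (F (prod_tgt tgt1 tgt2 d))"
      proof (cases d)
        case (Inl p)
        then obtain e x where p: "d = Inl (e,x)" "e \<in> E1" "x \<in> V2" using d unfolding prod_edges_def by (cases p) auto
        have a: "phi (src1 e) \<in> {0..<r}" "phi (tgt1 e) \<in> {0..<r}" "psi x \<in> {0..<r}"
          "1 \<le> circ_dist r (phi (src1 e)) (phi (tgt1 e))"
          using p g1 phi psi unfolding circ_coloring_def by auto
        show ?thesis using p addm_dist[OF a(1,2,3)] addm_range[OF a(1,3)] addm_range[OF a(2,3)] a(4)
          unfolding F_def prod_src_def prod_tgt_def by simp
      next
        case (Inr p)
        then obtain u f where p: "d = Inr (u,f)" "u \<in> V1" "f \<in> E2" using d unfolding prod_edges_def by (cases p) auto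
        have a: "psi (src2 f) \<in> {0..<r}" "psi (tgt2 f) \<in> {0..<r}" "phi u \<in> {0..<r}"
          "1 \<le> circ_dist r (psi (src2 f)) (psi (tgt2 f))"
          using p g2 phi psi unfolding circ_coloring_def by auto
        have c: "addm r (phi u) y = addm r y (phi u)" for y unfolding addm_def by (simp add: add.commute)
        show ?thesis using p addm_dist[OF a(1,2,3)] addm_range[OF a(1,3)] addm_range[OF a(2,3)] a(4)
          unfolding F_def prod_src_def prod_tgt_def by (simp add: c)
      qed
      then show "(prod2_sign E1 src1 tgt1 sg E2 src2 tgt2 tau d = 1 \<longrightarrow>
          1 \<le> circ_dist (2 * r) (F (prod_src src1 src2 d)) (F (prod_tgt tgt1 tgt2 d)))" and "(prod2_sign E1 src1 tgt1 sg E2 src2 tgt2 tau d = - 1 \<longrightarrow>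
          1 \<le> circ_dist (2 * r) (F (prod_src src1 src2 d)) (circ_bar (2 * r) (F (prod_tgt tgt1 tgt2 d))))"
        using dist_double by blast+
    qed
    then show ?thesis unfolding S_def r_def by blast
  qed
  have "Inf S / 2 \<le> max (Inf S1) (Inf S2)"
  proof (rule ccontr)
    assume "\<not> ?thesis"
    then have "Inf S1 < Inf S / 2" "Inf S2 < Inf S / 2" by auto
    then obtain r1 r2 where r: "r1 \<in> S1" "r1 < Inf S / 2" "r2 \<in> S2" "r2 < Inf S / 2"
      using cInf_less_iff[OF ne1 bb1] cInf_less_iff[OF ne2 bb2] by blast
    have "Inf S \<le> 2 * max r1 r2" using cInf_lower[OF key[OF r(1,3)] bb] .
    then show False using r by auto
  qed
  then show ?thesis unfolding S_def S1_def S2_def signed_chi_c_def chi_c_def by simp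
qed

end
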